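(* For every prime $p$, as $v\to\infty$, $g_p'(v)\ge(1+o(1))v^2/49$; consequently, as $t\to\infty$, $g_p(t)\le(7+o(1))\sqrt{t}$.
   Context: For a prime $p$, the addition table of $\mathbb{Z}_p^m$ is the set of triples (faces) $(a,b,a+b)$, $a,b\in\mathbb{Z}_p^m$, viewed as a tripartite 3-uniform hypergraph whose vertices are rows, columns and labels (three disjoint copies of $\mathbb{Z}_p^m$). A set of vertices spans a face if all three vertices of the face are in the set. $g_p'(v)$ is the maximal number of faces that can be spanned by a set of $v$ vertices in the addition table of $\mathbb{Z}_p^m$, for any $m$ sufficiently large in terms of $v$ and $p$. An $(r,s)$-configuration is a collection of $s$ faces involving at most $r$ vertices in total. $g_p(t)$ is the least integer $r$ such that the addition table of $\mathbb{Z}_p^m$ contains an $(r,t)$-configuration for all $m$ sufficiently large in terms of $t$ and $p$. *)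

theory Defs
  imports Complex_Main "HOL-Computational_Algebra.Primes"
begin

definition zpm :: "nat \<Rightarrow> nat \<Rightarrow> (nat \<Rightarrow> nat) set" where
  "zpm p m = {x. (\<forall>i<m. x i < p) \<and> (\<forall>i\<ge>m. x i = 0)}"

definition vadd :: "nat \<Rightarrow> (nat \<Rightarrow> nat) \<Rightarrow> (nat \<Rightarrow> nat) \<Rightarrow> (nat \<Rightarrow> nat)" where
  "vadd p x y = (\<lambda>i. (x i + y i) mod p)"

text \<open>Vertices of the addition table: three disjoint copies (rows, columns, labels).\<close>
datatype 'a vtx = Row 'a | Col 'a | Lab 'a

definition verts :: "nat \<Rightarrow> nat \<Rightarrow> (nat \<Rightarrow> nat) vtx set" where
  "verts p m = Row ` zpm p m \<union> Col ` zpm p m \<union> Lab ` zpm p m"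

definition face :: "nat \<Rightarrow> (nat \<Rightarrow> nat) \<Rightarrow> (nat \<Rightarrow> nat) \<Rightarrow> (nat \<Rightarrow> nat) vtx set" where
  "face p a b = {Row a, Col b, Lab (vadd p a b)}"

definition faces :: "nat \<Rightarrow> nat \<Rightarrow> (nat \<Rightarrow> nat) vtx set set" where
  "faces p m = {face p a b | a b. a \<in> zpm p m \<and> b \<in> zpm p m}"

definition spanned :: "nat \<Rightarrow> nat \<Rightarrow> (nat \<Rightarrow> nat) vtx set \<Rightarrow> nat" where
  "spanned p m S = card {f \<in> faces p m. f \<subseteq> S}"

definition maxspan :: "nat \<Rightarrow> nat \<Rightarrow> nat \<Rightarrow> nat" where
  "maxspan p m v = Max {spanned p m S | S. S \<subseteq> verts p m \<and> card S = v}"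

definition gp' :: "nat \<Rightarrow> nat \<Rightarrow> nat" where
  "gp' p v = (THE c. \<forall>\<^sub>F m in sequentially. maxspan p m v = c)"

definition has_config :: "nat \<Rightarrow> nat \<Rightarrow> nat \<Rightarrow> nat \<Rightarrow> bool" where
  "has_config p m r s = (\<exists>F. F \<subseteq> faces p m \<and> card F = s \<and> card (\<Union>F) \<le> r)"

definition gp :: "nat \<Rightarrow> nat \<Rightarrow> nat" where
  "gp p t = (LEAST r. \<forall>\<^sub>F m in sequentially. has_config p m r t)"

end

theory Submission imports Defs "HOL-Library.FuncSet" begin

definition G :: "nat \<Rightarrow> (nat \<Rightarrow> nat set) \<Rightarrow> (nat \<Rightarrow> nat) set" where
  "G n B = {x. (\<forall>i<n. x i \<in> B i) \<and> (\<forall>i\<ge>n. x i = 0)}"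

lemma G_bij: "bij_betw (\<lambda>x. restrict x {..<n}) (G n B) (PiE {..<n} B)"
proof (rule bij_betw_byWitness[where f' = "\<lambda>f i. if i < n then f i else 0"])
  show "\<forall>a\<in>G n B. (\<lambda>i. if i < n then restrict a {..<n} i else 0) = a"
    by (auto simp: G_def fun_eq_iff)
  show "\<forall>a'\<in>PiE {..<n} B. restrict (\<lambda>i. if i < n then a' i else 0) {..<n} = a'"
    by (auto simp: PiE_def extensional_def fun_eq_iff)
  show "(\<lambda>x. restrict x {..<n}) ` G n B \<subseteq> PiE {..<n} B" unfolding G_def by (rule image_subsetI, rule PiE_I) auto
  show "(\<lambda>f i. if i < n then f i else 0) ` PiE {..<n} B \<subseteq> G n B"
    by (auto simp: G_def PiE_def Pi_def)
qed

lemma G_card: "card (G n B) = (\<Prod>i<n. card (B i))"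
  using bij_betw_same_card[OF G_bij] card_PiE[of "{..<n}" B] by simp

lemma G_finite: "(\<And>i. i < n \<Longrightarrow> finite (B i)) \<Longrightarrow> finite (G n B)"
  using bij_betw_finite[OF G_bij] finite_PiE[of "{..<n}" B] by simp

lemma zpm_G: "zpm p m = G m (\<lambda>_. {..<p})"
  by (auto simp: zpm_def G_def)

lemma zpm_finite: "finite (zpm p m)"
  by (simp add: zpm_G G_finite)

lemma zpm_card: "card (zpm p m) = p ^ m"
  by (simp add: zpm_G G_card)

lemma zpm_mono: "zpm p m \<subseteq> zpm p (Suc m)" if "p > 0"
  using that by (auto simp: zpm_def less_Suc_eq)

lemma verts_finite: "finite (verts p m)"
  by (simp add: verts_def zpm_finite)

lemma faces_finite: "finite (faces p m)"
proof -
  have "faces p m = (\<lambda>(a,b). face p a b) ` (zpm p m \<times> zpm p m)"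
    by (auto simp: faces_def)
  thus ?thesis by (simp add: zpm_finite)
qed

lemma faces_mono: "faces p m \<subseteq> faces p (Suc m)" if "p > 0"
  using zpm_mono[OF that] by (auto simp: faces_def)

lemma verts_mono: "verts p m \<subseteq> verts p (Suc m)" if "p > 0"
  using zpm_mono[OF that] unfolding verts_def by blast

lemma verts_card: "card (verts p m) \<ge> p ^ m"
proof -
  have "card (Row ` zpm p m) = p ^ m"
    by (simp add: card_image zpm_card inj_on_def)
  moreover have "Row ` zpm p m \<subseteq> verts p m" by (auto simp: verts_def)
  ultimately show ?thesis using card_mono[OF verts_finite] by metis
qed

lemma spanned_le: "finite S \<Longrightarrow> spanned p m S \<le> card S * card S"
proof -
  assume fS: "finite S"
  let ?A = "{a. Row a \<in> S}" and ?B = "{b. Col b \<in> S}"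
  have fA: "finite ?A" using finite_vimageI[OF fS, of Row] by (simp add: inj_def vimage_def)
  have fB: "finite ?B" using finite_vimageI[OF fS, of Col] by (simp add: inj_def vimage_def)
  have cA: "card ?A \<le> card S" by (rule card_inj_on_le[where f=Row, OF _ _ fS]) (auto simp: inj_on_def)
  have cB: "card ?B \<le> card S" by (rule card_inj_on_le[where f=Col, OF _ _ fS]) (auto simp: inj_on_def)
  have "{f \<in> faces p m. f \<subseteq> S} \<subseteq> (\<lambda>(a,b). face p a b) ` (?A \<times> ?B)"
    by (auto simp: faces_def face_def)
  hence "spanned p m S \<le> card ((\<lambda>(a,b). face p a b) ` (?A \<times> ?B))"
    unfolding spanned_def using fA fB by (intro card_mono) auto
  also have "\<dots> \<le> card (?A \<times> ?B)" by (rule card_image_le) (use fA fB in auto)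
  also have "\<dots> \<le> card S * card S" using cA cB by (simp add: card_cartesian_product mult_le_mono)
  finally show ?thesis .
qed

lemma spanned_mono: "S \<subseteq> T \<Longrightarrow> spanned p m S \<le> spanned p m T"
  unfolding spanned_def by (rule card_mono) (auto simp: faces_finite)

lemma spanned_mono_m: "p > 0 \<Longrightarrow> spanned p m S \<le> spanned p (Suc m) S"
  unfolding spanned_def using faces_mono[of p m] by (intro card_mono) (auto simp: faces_finite)


lemma exists_k: fixes p v :: nat assumes p: "p \<ge> 2" and v3: "v \<ge> 3" shows "\<exists>k. 3 * p ^ k \<le> v \<and> v < 3 * p ^ Suc k"
  using v3 proof (induction v rule: nat_induct_at_least)
  case base
  then show ?case using p by (intro exI[of _ 0]) auto
next
  case (Suc v)
  then obtain k where k: "3 * p ^ k \<le> v" "v < 3 * p ^ Suc k" by auto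
  show ?case
  proof (cases "Suc v < 3 * p ^ Suc k")
    case True then show ?thesis using k by (intro exI[of _ k]) auto
  next
    case False
    hence e: "Suc v = 3 * p ^ Suc k" using k by auto
    have "p ^ Suc k < p ^ Suc (Suc k)" using p by (intro power_strict_increasing) auto
    thus ?thesis using e by (intro exI[of _ "Suc k"]) auto
  qed
qed

lemma construction:
  assumes p: "p \<ge> 2" and v: "v \<ge> 3"
  shows "\<forall>\<^sub>F m in sequentially. \<exists>S. S \<subseteq> verts p m \<and> card S = v \<and> v ^ 2 \<le> 49 * spanned p m S"
proof -
  obtain k where k: "3 * p ^ k \<le> v" "v < 3 * p ^ Suc k" using exists_k[OF p v] by auto
  define n where "n = p ^ k"
  have n0: "n > 0" using p by (simp add: n_def)
  define a where "a = (v + n) div (4 * n)"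
  have a1: "4 * n \<le> v + n" using k by (simp add: n_def)
  have a_ge: "a \<ge> 1" unfolding a_def using div_le_mono[OF a1, of "4*n"] n0 by simp
  have a_ub: "a * (4 * n) \<le> v + n" unfolding a_def by (rule div_times_less_eq_dividend)
  have a_lb: "v + n < (a + 1) * (4 * n)" 
  proof -
    have "v + n = a * (4 * n) + (v + n) mod (4 * n)" unfolding a_def by (rule div_mult_mod_eq[symmetric])
    moreover have "(v + n) mod (4 * n) < 4 * n" using n0 by simp
    ultimately show ?thesis by simp
  qed
  have vlt: "v < 3 * p * n" using k by (simp add: n_def mult.commute mult.left_commute)
  have a_p: "a < p"
  proof (rule ccontr)
    assume "\<not> a < p"
    hence "p * (4 * n) \<le> a * (4 * n)" by simp
    moreover have "p * (4 * n) = 4 * (p * n)" "3 * p * n = 3 * (p * n)" by simp_all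
    moreover have "2 * n \<le> p * n" using p by simp
    ultimately show False using a_ub vlt by linarith
  qed
  have v_7: "v \<le> 7 * (a * n)" 
  proof -
    have "n \<le> a * n" using a_ge by simp
    moreover have "(a + 1) * (4 * n) = 4 * (a * n) + 4 * n" "7 * (a * n) = 4 * (a * n) + 3 * (a * n)" by simp_all
    ultimately show ?thesis using a_lb by linarith
  qed
  have S_le: "2 * (n * a) + n * (2 * a - 1) \<le> v" 
  proof -
    have "n * (2 * a - 1) = n * (2 * a) - n" by (simp add: right_diff_distrib')
    moreover have "n \<le> n * (2 * a)" using a_ge by simp
    moreover have "a * (4 * n) = 4 * (n * a)" "n * (2 * a) = 2 * (n * a)" by simp_all
    ultimately show ?thesis using a_ub by linarith
  qed
  define T where "T = (\<lambda>j. j mod p) ` {..<2 * a - 1}"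
  define R where "R = G (Suc k) (\<lambda>i. if i < k then {..<p} else {..<a})"
  define L where "L = G (Suc k) (\<lambda>i. if i < k then {..<p} else T)"
  have cR: "card R = n * a" by (simp add: R_def G_card n_def)
  have cT: "card T \<le> 2 * a - 1" unfolding T_def using card_image_le by fastforce
  have cL: "card L \<le> n * (2 * a - 1)" using cT by (simp add: L_def G_card n_def)
  have fR: "finite R" unfolding R_def by (rule G_finite) auto
  have fL: "finite L" unfolding L_def T_def by (rule G_finite) auto
  show ?thesis
    unfolding eventually_sequentially
  proof (intro exI[of _ "max (Suc k) v"] allI impI)
    fix m assume m: "max (Suc k) v \<le> m"
    have Rz: "R \<subseteq> zpm p m"
    proof
      fix x assume "x \<in> R"
      hence h1: "\<And>i. i < Suc k \<Longrightarrow> x i \<in> (if i < k then {..<p} else {..<a})"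
        and h2: "\<And>i. i \<ge> Suc k \<Longrightarrow> x i = 0" by (auto simp: R_def G_def)
      show "x \<in> zpm p m" unfolding zpm_def
      proof (intro CollectI conjI allI impI)
        fix i assume "i < m"
        show "x i < p"
        proof (cases "i < Suc k")
          case True then show ?thesis using h1[OF True] a_p by (auto split: if_splits)
        next
          case False then show ?thesis using h2[of i] p by simp
        qed
      next
        fix i assume "i \<ge> m" then show "x i = 0" using h2[of i] m by simp
      qed
    qed
    have Tp: "t < p" if "t \<in> T" for t using that p by (auto simp: T_def)
    have Lz: "L \<subseteq> zpm p m"
    proof
      fix x assume "x \<in> L"
      hence h1: "\<And>i. i < Suc k \<Longrightarrow> x i \<in> (if i < k then {..<p} else T)"
        and h2: "\<And>i. i \<ge> Suc k \<Longrightarrow> x i = 0" by (auto simp: L_def G_def)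
      show "x \<in> zpm p m" unfolding zpm_def
      proof (intro CollectI conjI allI impI)
        fix i assume "i < m"
        show "x i < p"
        proof (cases "i < Suc k")
          case True then show ?thesis using h1[OF True] Tp by (auto split: if_splits)
        next
          case False then show ?thesis using h2[of i] p by simp
        qed
      next
        fix i assume "i \<ge> m" then show "x i = 0" using h2[of i] m by simp
      qed
    qed
    have addL: "vadd p r s \<in> L" if "r \<in> R" "s \<in> R" for r s
    proof -
      have "r k < a" "s k < a" using that unfolding R_def G_def by auto
      hence "r k + s k < 2 * a - 1" by linarith
      hence "(r k + s k) mod p \<in> T" unfolding T_def by blast
      note hk = this
      show ?thesis unfolding L_def G_def vadd_def
      proof (intro CollectI conjI allI impI)
        fix i assume i: "i < Suc k"
        show "(r i + s i) mod p \<in> (if i < k then {..<p} else T)"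
        proof (cases "i < k")
          case True then show ?thesis using p by simp
        next
          case False then have "i = k" using i by simp
          then show ?thesis using hk by simp
        qed
      next
        fix i assume "i \<ge> Suc k" then show "(r i + s i) mod p = 0"
          using \<open>r \<in> R\<close> \<open>s \<in> R\<close> unfolding R_def G_def by auto
      qed
    qed
    define S0 where "S0 = Row ` R \<union> Col ` R \<union> Lab ` L"
    have S0v: "S0 \<subseteq> verts p m" using Rz Lz by (auto simp: S0_def verts_def)
    have cS0: "card S0 \<le> v"
    proof -
      have "card S0 \<le> card (Row ` R) + card (Col ` R) + card (Lab ` L)"
        
        unfolding S0_def using card_Un_le[of "Row ` R \<union> Col ` R" "Lab ` L"] card_Un_le[of "Row ` R" "Col ` R"] by linarith
      also have "\<dots> \<le> card R + card R + card L" by (intro add_mono card_image_le fR fL)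
      finally show ?thesis using cR cL S_le by linarith
    qed
    have "v \<le> m" using m by simp
    also have "m < 2 ^ m" by (rule less_exp)
    also have "(2::nat) ^ m \<le> p ^ m" by (rule power_mono) (use p in auto)
    also have "\<dots> \<le> card (verts p m)" by (rule verts_card)
    finally have "card (verts p m) \<ge> v" by simp
    then obtain S where S: "S0 \<subseteq> S" "S \<subseteq> verts p m" "card S = v"
      using exists_subset_between[OF cS0 _ S0v verts_finite] by blast
    have inj: "inj_on (\<lambda>(r, s). face p r s) (R \<times> R)"
      by (auto simp: inj_on_def face_def)
    have "(\<lambda>(r, s). face p r s) ` (R \<times> R) \<subseteq> {f \<in> faces p m. f \<subseteq> S0}"
      using Rz addL by (auto simp: faces_def face_def S0_def)
    hence "card ((\<lambda>(r, s). face p r s) ` (R \<times> R)) \<le> spanned p m S0"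
      unfolding spanned_def by (intro card_mono) (auto simp: faces_finite)
    hence "card R * card R \<le> spanned p m S0"
      using card_image[OF inj] by (simp add: card_cartesian_product)
    also have "\<dots> \<le> spanned p m S" by (rule spanned_mono[OF S(1)])
    finally have sp: "(n * a) * (n * a) \<le> spanned p m S" using cR by simp
    have "v ^ 2 \<le> (7 * (a * n)) ^ 2" using v_7 by (rule power_mono) simp
    also have "\<dots> = 49 * ((n * a) * (n * a))" by (simp add: power2_eq_square algebra_simps)
    also have "\<dots> \<le> 49 * spanned p m S" using sp by simp
    finally show "\<exists>S. S \<subseteq> verts p m \<and> card S = v \<and> v ^ 2 \<le> 49 * spanned p m S"
      using S by blast
  qed
qed


definition MS where "MS p m v = {spanned p m S | S. S \<subseteq> verts p m \<and> card S = v}"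

lemma MS_finite: "finite (MS p m v)"
proof -
  have "MS p m v \<subseteq> {..v * v}"
  proof
    fix x assume "x \<in> MS p m v"
    then obtain S where S: "S \<subseteq> verts p m" "card S = v" "x = spanned p m S" by (auto simp: MS_def)
    have "finite S" by (rule finite_subset[OF S(1) verts_finite])
    thus "x \<in> {..v * v}" using spanned_le[of S p m] S by simp
  qed
  thus ?thesis using finite_subset by blast
qed

lemma MS_ne: "v \<le> p ^ m \<Longrightarrow> MS p m v \<noteq> {}"
proof -
  assume "v \<le> p ^ m"
  hence "v \<le> card (verts p m)" using verts_card[of p m] by linarith
  then obtain S where "S \<subseteq> verts p m" "card S = v" by (rule obtain_subset_with_card_n)
  thus ?thesis unfolding MS_def by blast
qed

lemma maxspan_ge: "S \<subseteq> verts p m \<Longrightarrow> card S = v \<Longrightarrow> spanned p m S \<le> maxspan p m v"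
  unfolding maxspan_def using MS_finite[of p m v] unfolding MS_def
  by (intro Max_ge) auto

lemma maxspan_le: "v \<le> p ^ m \<Longrightarrow> maxspan p m v \<le> v * v"
proof -
  assume h: "v \<le> p ^ m"
  have "maxspan p m v \<in> MS p m v" unfolding maxspan_def MS_def[symmetric]
    by (rule Max_in[OF MS_finite MS_ne[OF h]])
  then obtain S where "S \<subseteq> verts p m" "card S = v" "maxspan p m v = spanned p m S"
    unfolding MS_def by blast
  moreover have "finite S" by (rule finite_subset[OF \<open>S \<subseteq> verts p m\<close> verts_finite])
  ultimately show ?thesis using spanned_le[of S p m] by simp
qed

lemma maxspan_mono: "p > 0 \<Longrightarrow> v \<le> p ^ m \<Longrightarrow> maxspan p m v \<le> maxspan p (Suc m) v"
proof -
  assume p: "p > 0" and h: "v \<le> p ^ m"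
  have "maxspan p m v \<in> MS p m v" unfolding maxspan_def MS_def[symmetric]
    by (rule Max_in[OF MS_finite MS_ne[OF h]])
  then obtain S where S: "S \<subseteq> verts p m" "card S = v" "maxspan p m v = spanned p m S"
    unfolding MS_def by blast
  have "spanned p m S \<le> spanned p (Suc m) S" by (rule spanned_mono_m[OF p])
  also have "\<dots> \<le> maxspan p (Suc m) v" using S verts_mono[OF p, of m] by (intro maxspan_ge) auto
  finally show ?thesis using S by simp
qed

lemma maxspan_stable:
  assumes p: "p \<ge> 2"
  shows "\<exists>c. \<forall>\<^sub>F m in sequentially. maxspan p m v = c"
proof -
  define f where "f j = maxspan p (v + j) v" for j
  have vle: "v \<le> p ^ (v + j)" for j
  proof -
    have "v + j < 2 ^ (v + j)" by (rule less_exp)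
    also have "(2::nat) ^ (v + j) \<le> p ^ (v + j)" by (rule power_mono) (use p in auto)
    finally show ?thesis by simp
  qed
  have step: "f j \<le> f (Suc j)" for j
    unfolding f_def using maxspan_mono[where p=p and m="v + j" and v=v] vle[of j] p by simp
  have inc: "incseq f" using step by (rule incseq_SucI)
  have bnd: "f j \<le> v * v" for j unfolding f_def by (rule maxspan_le[OF vle])
  have "range f \<subseteq> {..v*v}" using bnd by auto
  hence fin: "finite (range f)" by (rule finite_subset) simp
  define c where "c = Max (range f)"
  have "c \<in> range f" unfolding c_def by (rule Max_in[OF fin]) simp
  then obtain j where j: "f j = c" by auto
  have "f i = c" if "i \<ge> j" for i
  proof -
    have "f j \<le> f i" using inc that by (simp add: incseq_def)
    moreover have "f i \<le> c" unfolding c_def using fin by simp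
    ultimately show ?thesis using j by simp
  qed
  note fc = this
  have "maxspan p m v = c" if "m \<ge> v + j" for m
  proof -
    have "f (m - v) = c" using that by (intro fc) simp
    moreover have "v + (m - v) = m" using that by simp
    ultimately show ?thesis unfolding f_def by simp
  qed
  thus ?thesis unfolding eventually_sequentially by blast
qed

lemma gp'_ev:
  assumes p: "p \<ge> 2"
  shows "\<forall>\<^sub>F m in sequentially. maxspan p m v = gp' p v"
proof -
  obtain c where c: "\<forall>\<^sub>F m in sequentially. maxspan p m v = c" using maxspan_stable[OF p] by blast
  have uniq: "d = c" if "\<forall>\<^sub>F m in sequentially. maxspan p m v = d" for d
  proof -
    have "\<forall>\<^sub>F m in sequentially. d = c" using eventually_conj[OF that c] by (rule eventually_mono) auto
    thus ?thesis by simp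
  qed
  have "gp' p v = c" unfolding gp'_def
    by (rule the_equality[where P="\<lambda>c. \<forall>\<^sub>F m in sequentially. maxspan p m v = c", OF c uniq])
  thus ?thesis using c by simp
qed


lemma gp'_lb:
  assumes p: "p \<ge> 2" and v: "v \<ge> 3"
  shows "v ^ 2 \<le> 49 * gp' p v"
proof -
  have "\<forall>\<^sub>F m in sequentially. maxspan p m v = gp' p v \<and>
      (\<exists>S. S \<subseteq> verts p m \<and> card S = v \<and> v ^ 2 \<le> 49 * spanned p m S)"
    by (rule eventually_conj[OF gp'_ev[OF p] construction[OF p v]])
  then obtain N where "\<forall>m\<ge>N. maxspan p m v = gp' p v \<and>
      (\<exists>S. S \<subseteq> verts p m \<and> card S = v \<and> v ^ 2 \<le> 49 * spanned p m S)"
    unfolding eventually_sequentially by blast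
  then obtain S where S: "maxspan p N v = gp' p v" "S \<subseteq> verts p N" "card S = v"
    "v ^ 2 \<le> 49 * spanned p N S" by blast
  have "spanned p N S \<le> maxspan p N v" by (rule maxspan_ge[OF S(2,3)])
  thus ?thesis using S by simp
qed

lemma gp_ub:
  assumes p: "p \<ge> 2" and v: "v \<ge> 3" and t: "49 * t \<le> v ^ 2"
  shows "gp p t \<le> v"
  unfolding gp_def
proof (rule Least_le)
  show "\<forall>\<^sub>F m in sequentially. has_config p m v t"
    using construction[OF p v]
  proof (rule eventually_mono)
    fix m assume "\<exists>S. S \<subseteq> verts p m \<and> card S = v \<and> v ^ 2 \<le> 49 * spanned p m S"
    then obtain S where S: "S \<subseteq> verts p m" "card S = v" "v ^ 2 \<le> 49 * spanned p m S" by blast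
    have fS: "finite S" by (rule finite_subset[OF S(1) verts_finite])
    have "t \<le> card {f \<in> faces p m. f \<subseteq> S}" using S(3) t unfolding spanned_def by linarith
    then obtain F where F: "F \<subseteq> {f \<in> faces p m. f \<subseteq> S}" "card F = t"
      by (rule obtain_subset_with_card_n)
    have "\<Union>F \<subseteq> S" using F(1) by blast
    hence "card (\<Union>F) \<le> card S" by (rule card_mono[OF fS])
    thus "has_config p m v t" unfolding has_config_def using F S(2) by blast
  qed
qed

theorem proposition2:
  fixes p :: nat
  assumes "prime p"
  shows "(\<forall>\<epsilon>>0. \<forall>\<^sub>F v in sequentially. real (gp' p v) \<ge> (1 - \<epsilon>) * real v ^ 2 / 49)
       \<and> (\<forall>\<epsilon>>0. \<forall>\<^sub>F t in sequentially. real (gp p t) \<le> (7 + \<epsilon>) * sqrt (real t))"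
proof
  have p: "p \<ge> 2" using assms prime_ge_2_nat by blast
  show "\<forall>\<epsilon>>0. \<forall>\<^sub>F v in sequentially. real (gp' p v) \<ge> (1 - \<epsilon>) * real v ^ 2 / 49"
  proof (intro allI impI)
    fix \<epsilon> :: real assume e: "\<epsilon> > 0"
    show "\<forall>\<^sub>F v in sequentially. real (gp' p v) \<ge> (1 - \<epsilon>) * real v ^ 2 / 49"
      unfolding eventually_sequentially
    proof (intro exI[of _ 3] allI impI)
      fix v :: nat assume v: "3 \<le> v"
      have "real (v ^ 2) \<le> real (49 * gp' p v)" using gp'_lb[OF p v] by linarith
      hence "real v ^ 2 \<le> 49 * real (gp' p v)" by simp
      moreover have "(1 - \<epsilon>) * real v ^ 2 \<le> real v ^ 2" 
        using e mult_right_mono[of "1 - \<epsilon>" 1 "real v ^ 2"] by simp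
      ultimately show "real (gp' p v) \<ge> (1 - \<epsilon>) * real v ^ 2 / 49" by simp
    qed
  qed
  show "\<forall>\<epsilon>>0. \<forall>\<^sub>F t in sequentially. real (gp p t) \<le> (7 + \<epsilon>) * sqrt (real t)"
  proof (intro allI impI)
    fix \<epsilon> :: real assume e: "\<epsilon> > 0"
    show "\<forall>\<^sub>F t in sequentially. real (gp p t) \<le> (7 + \<epsilon>) * sqrt (real t)"
      unfolding eventually_sequentially
    proof (intro exI[of _ "nat \<lceil>1 / \<epsilon>^2\<rceil> + 1"] allI impI)
      fix t :: nat assume t: "nat \<lceil>1 / \<epsilon>^2\<rceil> + 1 \<le> t"
      have t1: "real t \<ge> 1" using t by linarith
      have te: "real t \<ge> 1 / \<epsilon>^2" using t by linarith
      have s1: "sqrt (real t) \<ge> 1" using t1 by simp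
      have "sqrt (real t) \<ge> sqrt (1 / \<epsilon>^2)" using te by (rule real_sqrt_le_mono)
      hence se: "sqrt (real t) \<ge> 1 / \<epsilon>" using e by (simp add: real_sqrt_divide)
      hence se1: "\<epsilon> * sqrt (real t) \<ge> 1" using e by (simp add: field_simps)
      define v where "v = nat \<lceil>7 * sqrt (real t)\<rceil>"
      have vge: "real v \<ge> 7 * sqrt (real t)" unfolding v_def by linarith
      have vle: "real v \<le> 7 * sqrt (real t) + 1" unfolding v_def using s1 by linarith
      have v3: "v \<ge> 3" using vge s1 by linarith
      have "49 * real t = (7 * sqrt (real t)) ^ 2" by (simp add: power_mult_distrib)
      also have "\<dots> \<le> real v ^ 2" using vge s1 by (intro power_mono) auto
      finally have "real (49 * t) \<le> real (v ^ 2)" by simp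
      hence tv: "49 * t \<le> v ^ 2" by linarith
      have "real (gp p t) \<le> real v" using gp_ub[OF p v3 tv] by simp
      also have "\<dots> \<le> (7 + \<epsilon>) * sqrt (real t)" using vle se1 by (simp add: algebra_simps)
      finally show "real (gp p t) \<le> (7 + \<epsilon>) * sqrt (real t)" .
    qed
  qed
qed

end
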